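(* Let $\mathbf{L}=\langle L,\leq,0,1\rangle$ be a totally ordered complete lattice (regarded as a Gödel algebra), let $\varphi$ be a formula of a first-order language $\mathcal{J}$ and let $\mathbf{M}$ be a finite $\mathbf{L}$-structure for $\mathcal{J}$. Let $f\colon L\to L$ be an order embedding with $f(0)=0$ and $f(1)=1$. Then $\mathcal{D}_{\mathbf{M},\varphi}\circ f=\mathcal{D}_{\mathbf{M}\circ f,\varphi}$, where $\mathbf{M}\circ f$ is the $\mathbf{L}$-structure with the same universe as $\mathbf{M}$ and $\mathbf{r}^{\mathbf{M}\circ f}=\mathbf{r}^{\mathbf{M}}\circ f$ for every relation symbol $\mathbf{r}$ of $\mathcal{J}$.
   Context: On $L$ define $a\rightarrow b=1$ if $a\leq b$ and $a\rightarrow b=b$ otherwise. A language $\mathcal{J}$ is a set of relation symbols with arities; $X$ is a countable set of object variables. Formulas: $\overline{0}$; $\mathbf{r}(x_1,\dots,x_n)$ for $n$-ary $\mathbf{r}$ and $x_i\in X$; $\varphi\wedge\psi$, $\varphi\Rightarrow\psi$; $(\forall x)\varphi$, $(\exists x)\varphi$. An $\mathbf{L}$-structure $\mathbf{M}$ consists of a non-empty universe $M$ and, for each $n$-ary $\mathbf{r}$, a map $\mathbf{r}^{\mathbf{M}}\colon M^n\to L$; it is finite if each $\mathbf{r}^{\mathbf{M}}$ takes a nonzero value on only finitely many arguments. For a valuation $v\colon X\to M$: $\|\overline{0}\|_{\mathbf{M},v}=0$, $\|\mathbf{r}(x_1,\dots,x_n)\|_{\mathbf{M},v}=\mathbf{r}^{\mathbf{M}}(v(x_1),\dots,v(x_n))$,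 $\|\varphi\wedge\psi\|=\inf\{\|\varphi\|,\|\psi\|\}$, $\|\varphi\Rightarrow\psi\|=\|\varphi\|\rightarrow\|\psi\|$, $\|(\forall x)\varphi\|_{\mathbf{M},v}=\inf\{\|\varphi\|_{\mathbf{M},w};\ w=_x v\}$, $\|(\exists x)\varphi\|_{\mathbf{M},v}=\sup\{\|\varphi\|_{\mathbf{M},w};\ w=_x v\}$, where $w=_x v$ means $w$ agrees with $v$ except possibly at $x$. If the free variables of $\varphi$ are $x_1,\dots,x_n$ and $R=\{x_1,\dots,x_n\}$ (used as attributes with values in $M$), $\mathcal{D}_{\mathbf{M},\varphi}$ is the map on tuples $r\colon R\to M$ given by $\mathcal{D}_{\mathbf{M},\varphi}(r)=\|\varphi\|_{\mathbf{M},v}$ for any valuation $v$ with $v(x_i)=r(x_i)$ for all $i$. For a map $g$ into $L$, $g\circ f$ denotes $x\mapsto f(g(x))$. $f$ is an order embedding if $a\leq b\iff f(a)\leq f(b)$. *)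

theory Defs
  imports "HOL-Library.FuncSet"
begin

definition gimp :: "'l::complete_linorder \<Rightarrow> 'l \<Rightarrow> 'l" where
  "gimp a b = (if a \<le> b then top else b)"

type_synonym var = nat

datatype 'r fm =
    FBot
  | FRel 'r "var list"
  | FAnd "'r fm" "'r fm"
  | FImp "'r fm" "'r fm"
  | FAll var "'r fm"
  | FEx var "'r fm"

fun wf_fm :: "('r \<Rightarrow> nat) \<Rightarrow> 'r fm \<Rightarrow> bool" where
  "wf_fm ar FBot = True"
| "wf_fm ar (FRel r xs) = (length xs = ar r)"
| "wf_fm ar (FAnd p q) = (wf_fm ar p \<and> wf_fm ar q)"
| "wf_fm ar (FImp p q) = (wf_fm ar p \<and> wf_fm ar q)"
| "wf_fm ar (FAll x p) = wf_fm ar p"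
| "wf_fm ar (FEx x p) = wf_fm ar p"

fun fv :: "'r fm \<Rightarrow> var set" where
  "fv FBot = {}"
| "fv (FRel r xs) = set xs"
| "fv (FAnd p q) = fv p \<union> fv q"
| "fv (FImp p q) = fv p \<union> fv q"
| "fv (FAll x p) = fv p - {x}"
| "fv (FEx x p) = fv p - {x}"

text \<open>An L-structure: universe M (non-empty) and interpretation I of relation
  symbols as maps from n-tuples (lists of length ar r) over M into L.\<close>
definition is_structure :: "('r \<Rightarrow> nat) \<Rightarrow> 'm set \<Rightarrow> ('r \<Rightarrow> 'm list \<Rightarrow> 'l) \<Rightarrow> bool" where
  "is_structure ar M I \<longleftrightarrow> M \<noteq> {}"

definition finite_structure ::
  "('r \<Rightarrow> nat) \<Rightarrow> 'm set \<Rightarrow> ('r \<Rightarrow> 'm list \<Rightarrow> 'l::complete_linorder) \<Rightarrow> bool" where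
  "finite_structure ar M I \<longleftrightarrow> is_structure ar M I \<and>
     (\<forall>r. finite {xs. xs \<in> lists M \<and> length xs = ar r \<and> I r xs \<noteq> bot})"

fun eval :: "'m set \<Rightarrow> ('r \<Rightarrow> 'm list \<Rightarrow> 'l::complete_linorder) \<Rightarrow> (var \<Rightarrow> 'm) \<Rightarrow> 'r fm \<Rightarrow> 'l" where
  "eval M I v FBot = bot"
| "eval M I v (FRel r xs) = I r (map v xs)"
| "eval M I v (FAnd p q) = inf (eval M I v p) (eval M I v q)"
| "eval M I v (FImp p q) = gimp (eval M I v p) (eval M I v q)"
| "eval M I v (FAll x p) = (INF a\<in>M. eval M I (v(x := a)) p)"
| "eval M I v (FEx x p) = (SUP a\<in>M. eval M I (v(x := a)) p)"

text \<open>The relation D_{M,phi}: tuples are maps r : fv phi -> M (extensional),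
  value is the truth value under any valuation into M extending r.\<close>
definition Drel :: "'m set \<Rightarrow> ('r \<Rightarrow> 'm list \<Rightarrow> 'l::complete_linorder) \<Rightarrow> 'r fm \<Rightarrow> (var \<Rightarrow> 'm) \<Rightarrow> 'l" where
  "Drel M I \<phi> t = eval M I (SOME v. v \<in> UNIV \<rightarrow> M \<and> (\<forall>x\<in>fv \<phi>. v x = t x)) \<phi>"

definition order_embedding :: "('l::order \<Rightarrow> 'l) \<Rightarrow> bool" where
  "order_embedding f \<longleftrightarrow> (\<forall>a b. a \<le> b \<longleftrightarrow> f a \<le> f b)"

end

theory Submission
  imports Defs
begin

fun rels :: "'r fm \<Rightarrow> 'r set" where
  "rels FBot = {}"
| "rels (FRel r xs) = {r}"
| "rels (FAnd p q) = rels p \<union> rels q"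
| "rels (FImp p q) = rels p \<union> rels q"
| "rels (FAll x p) = rels p"
| "rels (FEx x p) = rels p"

lemma finite_rels: "finite (rels p)"
  by (induction p) auto

definition Vals :: "('r \<Rightarrow> nat) \<Rightarrow> 'm set \<Rightarrow> ('r \<Rightarrow> 'm list \<Rightarrow> 'l::complete_linorder) \<Rightarrow> 'r set \<Rightarrow> 'l set" where
  "Vals ar M I R = {bot, top} \<union> (\<Union>r\<in>R. I r ` {xs. xs \<in> lists M \<and> length xs = ar r \<and> I r xs \<noteq> bot})"

lemma Vals_mono: "R \<subseteq> R' \<Longrightarrow> Vals ar M I R \<subseteq> Vals ar M I R'"
  unfolding Vals_def by blast

lemma Vals_finite: "finite_structure ar M I \<Longrightarrow> finite R \<Longrightarrow> finite (Vals ar M I R)"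
  unfolding Vals_def finite_structure_def by auto

lemma inf_in: "finite A \<Longrightarrow> A \<noteq> {} \<Longrightarrow> Inf (A::'l::complete_linorder set) \<in> A"
  by (rule finite_Inf_in) (auto simp: inf_min min_def)

lemma sup_in: "finite A \<Longrightarrow> A \<noteq> {} \<Longrightarrow> Sup (A::'l::complete_linorder set) \<in> A"
  by (rule finite_Sup_in) (auto simp: sup_max max_def)

lemma eval_in_Vals:
  assumes fs: "finite_structure ar M I"
  shows "wf_fm ar p \<Longrightarrow> (\<forall>x. v x \<in> M) \<Longrightarrow> eval M I v p \<in> Vals ar M I (rels p)"
proof (induction p arbitrary: v)
  case FBot then show ?case by (simp add: Vals_def)
next
  case (FRel r xs)
  have "map v xs \<in> lists M" using FRel.prems by auto
  then show ?case using FRel.prems by (auto simp: Vals_def)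
next
  case (FAnd p q)
  have a: "eval M I v p \<in> Vals ar M I (rels (FAnd p q))"
    using FAnd Vals_mono[of "rels p" "rels (FAnd p q)" ar M I] by auto
  have b: "eval M I v q \<in> Vals ar M I (rels (FAnd p q))"
    using FAnd Vals_mono[of "rels q" "rels (FAnd p q)" ar M I] by auto
  show ?case using a b by (simp add: inf_min min_def)
next
  case (FImp p q)
  have b: "eval M I v q \<in> Vals ar M I (rels (FImp p q))"
    using FImp Vals_mono[of "rels q" "rels (FImp p q)" ar M I] by auto
  show ?case using b by (simp add: gimp_def Vals_def)
next
  case (FAll x p)
  have ne: "M \<noteq> {}" using FAll.prems by auto
  let ?A = "(\<lambda>a. eval M I (v(x := a)) p) ` M"
  have sub: "?A \<subseteq> Vals ar M I (rels p)" using FAll by auto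
  have "finite ?A" using sub Vals_finite[OF fs finite_rels] finite_subset by blast
  then have "Inf ?A \<in> ?A" using ne inf_in by blast
  then show ?case using sub by auto
next
  case (FEx x p)
  have ne: "M \<noteq> {}" using FEx.prems by auto
  let ?A = "(\<lambda>a. eval M I (v(x := a)) p) ` M"
  have sub: "?A \<subseteq> Vals ar M I (rels p)" using FEx by auto
  have "finite ?A" using sub Vals_finite[OF fs finite_rels] finite_subset by blast
  then have "Sup ?A \<in> ?A" using ne sup_in by blast
  then show ?case using sub by auto
qed

lemma eval_f:
  assumes fs: "finite_structure ar M I" and oe: "order_embedding f"
    and f0: "f bot = bot" and f1: "f top = top"
  shows "wf_fm ar p \<Longrightarrow> (\<forall>x. v x \<in> M) \<Longrightarrow> f (eval M I v p) = eval M (\<lambda>r xs. f (I r xs)) v p"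
proof (induction p arbitrary: v)
  case FBot then show ?case by (simp add: f0)
next
  case (FRel r xs) then show ?case by simp
next
  case (FAnd p q)
  have "f (inf a b) = inf (f a) (f b)" for a b
    using oe unfolding order_embedding_def by (auto simp: inf_min min_def)
  then show ?case using FAnd by simp
next
  case (FImp p q)
  have "f (gimp a b) = gimp (f a) (f b)" for a b
    using oe f1 unfolding order_embedding_def gimp_def by auto
  then show ?case using FImp by simp
next
  case (FAll x p)
  have ne: "M \<noteq> {}" using FAll.prems by auto
  let ?e = "\<lambda>a. eval M I (v(x := a)) p"
  let ?A = "?e ` M"
  have sub: "?A \<subseteq> Vals ar M I (rels p)" using FAll eval_in_Vals[OF fs] by auto
  have "finite ?A" using sub Vals_finite[OF fs finite_rels] finite_subset by blast
  then have "Inf ?A \<in> ?A" using ne inf_in by blast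
  then obtain a0 where a0: "a0 \<in> M" "Inf ?A = ?e a0" by auto
  have IH: "f (?e a) = eval M (\<lambda>r xs. f (I r xs)) (v(x := a)) p" if "a \<in> M" for a
    using FAll that by auto
  have le: "?e a0 \<le> ?e a" if "a \<in> M" for a
    using a0 that by (metis INF_lower)
  have "f (Inf ?A) = (INF a\<in>M. f (?e a))"
  proof (rule antisym)
    show "f (Inf ?A) \<le> (INF a\<in>M. f (?e a))"
      using le oe a0 unfolding order_embedding_def by (auto intro!: INF_greatest)
    show "(INF a\<in>M. f (?e a)) \<le> f (Inf ?A)"
      using a0 by (auto intro: INF_lower)
  qed
  then show ?case using IH by simp
next
  case (FEx x p)
  have ne: "M \<noteq> {}" using FEx.prems by auto
  let ?e = "\<lambda>a. eval M I (v(x := a)) p"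
  let ?A = "?e ` M"
  have sub: "?A \<subseteq> Vals ar M I (rels p)" using FEx eval_in_Vals[OF fs] by auto
  have "finite ?A" using sub Vals_finite[OF fs finite_rels] finite_subset by blast
  then have "Sup ?A \<in> ?A" using ne sup_in by blast
  then obtain a0 where a0: "a0 \<in> M" "Sup ?A = ?e a0" by auto
  have IH: "f (?e a) = eval M (\<lambda>r xs. f (I r xs)) (v(x := a)) p" if "a \<in> M" for a
    using FEx that by auto
  have le: "?e a \<le> ?e a0" if "a \<in> M" for a
    using a0 that by (metis SUP_upper)
  have "f (Sup ?A) = (SUP a\<in>M. f (?e a))"
  proof (rule antisym)
    show "(SUP a\<in>M. f (?e a)) \<le> f (Sup ?A)"
      using le oe a0 unfolding order_embedding_def by (auto intro!: SUP_least)
    show "f (Sup ?A) \<le> (SUP a\<in>M. f (?e a))"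
      using a0 by (auto intro: SUP_upper)
  qed
  then show ?case using IH by simp
qed

theorem corollary8:
  fixes ar :: "'r \<Rightarrow> nat"
    and M :: "'m set"
    and I :: "'r \<Rightarrow> 'm list \<Rightarrow> 'l::complete_linorder"
    and \<phi> :: "'r fm"
    and f :: "'l \<Rightarrow> 'l"
  assumes "wf_fm ar \<phi>"
    and "finite_structure ar M I"
    and "order_embedding f"
    and "f bot = bot" and "f top = top"
  shows "\<forall>t \<in> fv \<phi> \<rightarrow>\<^sub>E M.
           f (Drel M I \<phi> t) = Drel M (\<lambda>r xs. f (I r xs)) \<phi> t"
proof
  fix t assume t: "t \<in> fv \<phi> \<rightarrow>\<^sub>E M"
  obtain m0 where m0: "m0 \<in> M" using assms(2) unfolding finite_structure_def is_structure_def by auto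
  let ?P = "\<lambda>v. v \<in> UNIV \<rightarrow> M \<and> (\<forall>x\<in>fv \<phi>. v x = t x)"
  have "?P (\<lambda>x. if x \<in> fv \<phi> then t x else m0)" using t m0 by auto
  then have "?P (SOME v. ?P v)" by (rule someI[where P="?P"])
  then have "\<forall>x. (SOME v. ?P v) x \<in> M" by auto
  from eval_f[OF assms(2-5) assms(1) this] show "f (Drel M I \<phi> t) = Drel M (\<lambda>r xs. f (I r xs)) \<phi> t"
    unfolding Drel_def by simp
qed

end
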